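(* Let $\beta\in(0,2]$, $N>0$, and let $B$ be a Young function with $B(t)=Ne^{t^\beta}$ for all $t>t_0$ (some $t_0>0$), $B(t)=\int_0^tb$ with $b$ non-decreasing and left-continuous. For $t>0$ let $\lambda_t>0$ satisfy $\int_0^tB(b^{-1}(\lambda_te^{\tau^2/2}))e^{-\tau^2/2}\,d\tau=\sqrt{2\pi}$. Then $$\lim_{t\to\infty}\frac{\lambda_t}{c_\beta\,t^{1-\frac2\beta}}=1\ \text{ if }\beta\in(0,2),\qquad \lim_{t\to\infty}\frac{\lambda_t\log t}{c_2}=1\ \text{ if }\beta=2,$$ where $c_\beta=2^{\frac1\beta-\frac12}\sqrt\pi\,(2-\beta)$ for $\beta\in(0,2)$ and $c_2=2\sqrt\pi$.
   Context: A Young function is a convex $B\colon[0,\infty)\to[0,\infty]$ with $B(0)=0$; $b^{-1}(s)=\inf\{r\ge0:b(r)\ge s\}$ is the left-continuous generalized inverse of $b$. *)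

theory Defs
  imports "HOL-Analysis.Analysis"
begin

definition young_function :: "(real \<Rightarrow> real) \<Rightarrow> bool" where
  "young_function B \<longleftrightarrow> B 0 = 0 \<and> (\<forall>t\<ge>0. B t \<ge> 0) \<and> convex_on {0..} B"

definition gen_inv :: "(real \<Rightarrow> real) \<Rightarrow> real \<Rightarrow> real" where
  "gen_inv b s = Inf {r. r \<ge> 0 \<and> b r \<ge> s}"

definition c_beta :: "real \<Rightarrow> real" where
  "c_beta \<beta> = (if \<beta> = 2 then 2 * sqrt pi
               else 2 powr (1/\<beta> - 1/2) * sqrt pi * (2 - \<beta>))"

end

theory Submission
  imports Defs "HOL-Real_Asymp.Real_Asymp"
begin



locale L =
  fixes \<beta> N t0 :: real and B b lam :: "real \<Rightarrow> real"
  assumes beta: "0 < \<beta>" "\<beta> \<le> 2"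
    and N: "N > 0"
    and t0: "t0 > 0"
    and young: "young_function B"
    and Bexp: "\<And>t. t > t0 \<Longrightarrow> B t = N * exp (t powr \<beta>)"
    and Bint: "\<And>t. t \<ge> 0 \<Longrightarrow> (b has_integral B t) {0..t}"
    and bmono: "mono_on {0..} b"
    and bleft: "\<And>t. t > 0 \<Longrightarrow> continuous (at_left t) b"
    and lam: "\<And>t. t > 0 \<Longrightarrow> lam t > 0 \<and>
        ((\<lambda>\<tau>. B (gen_inv b (lam t * exp (\<tau>\<^sup>2 / 2))) * exp (- (\<tau>\<^sup>2 / 2)))
           has_integral sqrt (2 * pi)) {0..t}"
begin

definition Dv :: "real \<Rightarrow> real" where "Dv x = N * exp (x powr \<beta>) * (\<beta> * x powr (\<beta> - 1))"
definition psi :: "real \<Rightarrow> real" where "psi x = x powr \<beta> + (\<beta> - 1) * ln x + ln (N * \<beta>)"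

lemma B0: "B 0 = 0" and Bnn: "x \<ge> 0 \<Longrightarrow> B x \<ge> 0" and Bconv: "convex_on {0..} B"
  using young unfolding young_function_def by auto

lemma B_mono: assumes "0 \<le> x" "x \<le> y" shows "B x \<le> B y"
proof (cases "y = 0")
  case True then show ?thesis using assms by simp
next
  case False
  then have y: "y > 0" using assms by simp
  have "B ((1 - x/y) *\<^sub>R 0 + (x/y) *\<^sub>R y) \<le> (1 - x/y) * B 0 + (x/y) * B y"
    by (rule convex_onD[OF Bconv]) (use assms y in auto)
  also have "\<dots> = (x/y) * B y" using B0 by simp
  also have "\<dots> \<le> B y" using assms y Bnn[of y] by (intro mult_left_le_one_le) auto
  finally show ?thesis using y by simp
qed

lemma B_diff: assumes "0 \<le> x" "x \<le> y"
  shows "(y - x) * b x \<le> B y - B x" "B y - B x \<le> (y - x) * b y"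
proof -
  have iy: "b integrable_on {0..y}" using Bint[of y] assms by auto
  have Bx: "integral {0..x} b = B x" using Bint[of x] assms by (simp add: integral_unique)
  have By: "integral {0..y} b = B y" using Bint[of y] assms by (simp add: integral_unique)
  have c: "integral {0..x} b + integral {x..y} b = integral {0..y} b"
    by (rule Henstock_Kurzweil_Integration.integral_combine) (use assms iy in auto)
  have ixy: "b integrable_on {x..y}" by (rule integrable_subinterval_real[OF iy]) (use assms in auto)
  have e: "B y - B x = integral {x..y} b" using c Bx By by simp
  have "integral {x..y} (\<lambda>_. b x) \<le> integral {x..y} b"
    by (rule integral_le) (use ixy bmono assms in \<open>auto simp: mono_on_def\<close>)
  then show "(y - x) * b x \<le> B y - B x" using e assms by simp
  have "integral {x..y} b \<le> integral {x..y} (\<lambda>_. b y)"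
    by (rule integral_le) (use ixy bmono assms in \<open>auto simp: mono_on_def\<close>)
  then show "B y - B x \<le> (y - x) * b y" using e assms by simp
qed

lemma B_le: "0 \<le> x \<Longrightarrow> B x \<le> x * b x"
  using B_diff(2)[of 0 x] B0 by simp

lemma Bf_deriv: "x > 0 \<Longrightarrow> ((\<lambda>y. N * exp (y powr \<beta>)) has_real_derivative Dv x) (at x)"
  unfolding Dv_def by (auto intro!: derivative_eq_intros)

lemma b_eq_Dv: assumes x: "x > t0" shows "b x = Dv x"
proof -
  define Q where "Q k = (N * exp ((x + k) powr \<beta>) - N * exp (x powr \<beta>)) / k" for k
  have lim: "(Q \<longlongrightarrow> Dv x) (at 0)"
    using Bf_deriv[of x] x t0 unfolding Q_def DERIV_def by simp
  have ev: "eventually (\<lambda>k. k \<in> {-(x - t0)<..<x - t0}) (at 0)"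
    by (rule eventually_at_in_open') (use x in auto)
  have "b x \<le> Dv x"
  proof (rule tendsto_lowerbound)
    show "(Q \<longlongrightarrow> Dv x) (at_right 0)" using lim by (simp add: filterlim_at_split)
    have "eventually (\<lambda>k. k \<in> {-(x - t0)<..<x - t0}) (at_right 0)"
      using ev by (simp add: eventually_at_split)
    moreover have "eventually (\<lambda>k. k > 0) (at_right 0)" by (simp add: eventually_at_filter)
    ultimately show "eventually (\<lambda>k. b x \<le> Q k) (at_right 0)"
    proof eventually_elim
      case (elim k)
      have "(x + k - x) * b x \<le> B (x + k) - B x" by (rule B_diff) (use elim x t0 in auto)
      moreover have "B (x + k) = N * exp ((x + k) powr \<beta>)" "B x = N * exp (x powr \<beta>)"
        using elim x by (auto intro!: Bexp)
      ultimately show ?case using elim unfolding Q_def by (simp add: field_simps)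
    qed
  qed simp
  moreover have "Dv x \<le> b x"
  proof (rule tendsto_upperbound)
    show "(Q \<longlongrightarrow> Dv x) (at_left 0)" using lim by (simp add: filterlim_at_split)
    have "eventually (\<lambda>k. k \<in> {-(x - t0)<..<x - t0}) (at_left 0)"
      using ev by (simp add: eventually_at_split)
    moreover have "eventually (\<lambda>k. k < 0) (at_left 0)" by (simp add: eventually_at_filter)
    ultimately show "eventually (\<lambda>k. Q k \<le> b x) (at_left 0)"
    proof eventually_elim
      case (elim k)
      have "B x - B (x + k) \<le> (x - (x + k)) * b x" by (rule B_diff) (use elim x t0 in auto)
      moreover have "B (x + k) = N * exp ((x + k) powr \<beta>)" "B x = N * exp (x powr \<beta>)"
        using elim x by (auto intro!: Bexp)
      ultimately show ?case using elim unfolding Q_def by (simp add: field_simps)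
    qed
  qed simp
  ultimately show ?thesis by simp
qed


lemma Dv_pos: "x > 0 \<Longrightarrow> Dv x > 0" unfolding Dv_def using N beta by simp

lemma ln_Dv: "x > 0 \<Longrightarrow> ln (Dv x) = psi x"
  unfolding Dv_def psi_def using N beta by (simp add: ln_mult ln_powr algebra_simps)

lemma Dv_cont: "x > 0 \<Longrightarrow> isCont Dv x"
  unfolding Dv_def by (auto intro!: continuous_intros)

lemma psi_bound: assumes "e > 0" shows "\<exists>R. \<forall>x\<ge>R. \<bar>psi x - x powr \<beta>\<bar> \<le> e * x powr \<beta>"
proof -
  have "((\<lambda>x. ((\<beta> - 1) * ln x + ln (N * \<beta>)) / x powr \<beta>) \<longlongrightarrow> 0) at_top"
    using beta N by real_asymp
  then have "eventually (\<lambda>x. \<bar>((\<beta> - 1) * ln x + ln (N * \<beta>)) / x powr \<beta>\<bar> < e) at_top"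
    using assms by (auto simp: tendsto_iff dist_real_def)
  moreover have "eventually (\<lambda>x. x > (0::real)) at_top" by (rule eventually_gt_at_top)
  ultimately have "eventually (\<lambda>x. \<bar>psi x - x powr \<beta>\<bar> \<le> e * x powr \<beta>) at_top"
  proof eventually_elim
    case (elim x)
    then have "\<bar>(\<beta> - 1) * ln x + ln (N * \<beta>)\<bar> < e * x powr \<beta>"
      by (simp add: abs_divide pos_divide_less_eq)
    then show ?case unfolding psi_def by simp
  qed
  then show ?thesis by (auto simp: eventually_at_top_linorder)
qed

lemma Dv_big: "\<exists>x>t0. Dv x \<ge> s"
proof -
  have "filterlim Dv at_top at_top" unfolding Dv_def using beta N by real_asymp
  then have "eventually (\<lambda>x. Dv x \<ge> s) at_top" by (simp add: filterlim_at_top)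
  moreover have "eventually (\<lambda>x. x > t0) at_top" by (rule eventually_gt_at_top)
  ultimately have "eventually (\<lambda>x. x > t0 \<and> Dv x \<ge> s) at_top" by eventually_elim auto
  then obtain M where "\<forall>x\<ge>M. x > t0 \<and> Dv x \<ge> s" by (auto simp: eventually_at_top_linorder)
  then show ?thesis by (meson order_refl)
qed

definition Sset :: "real \<Rightarrow> real set" where "Sset s = {r. r \<ge> 0 \<and> b r \<ge> s}"

lemma gen_inv_Sset: "gen_inv b s = Inf (Sset s)" unfolding gen_inv_def Sset_def by simp

lemma Sset_ne: "Sset s \<noteq> {}"
proof -
  obtain x where "x > t0" "Dv x \<ge> s" using Dv_big by blast
  then have "x \<in> Sset s" using b_eq_Dv t0 unfolding Sset_def by auto
  then show ?thesis by blast
qed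

lemma Sset_bdd: "bdd_below (Sset s)" unfolding Sset_def by (auto intro: bdd_belowI)

lemma r_nonneg: "gen_inv b s \<ge> 0"
  unfolding gen_inv_Sset by (rule cInf_greatest[OF Sset_ne]) (auto simp: Sset_def)

lemma r_le: "x \<ge> 0 \<Longrightarrow> b x \<ge> s \<Longrightarrow> gen_inv b s \<le> x"
  unfolding gen_inv_Sset by (rule cInf_lower[OF _ Sset_bdd]) (auto simp: Sset_def)

lemma below_r: "0 \<le> y \<Longrightarrow> y < gen_inv b s \<Longrightarrow> b y < s"
  using r_le[of y s] by force

lemma above_r: assumes "x > gen_inv b s" shows "b x \<ge> s"
proof -
  obtain y where y: "y \<in> Sset s" "y < x"
    using assms cInf_less_iff[OF Sset_ne Sset_bdd] unfolding gen_inv_Sset by blast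
  then have "b y \<le> b x" using bmono unfolding mono_on_def Sset_def by auto
  then show ?thesis using y unfolding Sset_def by auto
qed

lemma b_r_le: assumes r: "gen_inv b s > 0" shows "b (gen_inv b s) \<le> s"
proof (rule tendsto_upperbound)
  show "(b \<longlongrightarrow> b (gen_inv b s)) (at_left (gen_inv b s))"
    using bleft[OF r] by (simp add: continuous_within)
  show "eventually (\<lambda>y. b y \<le> s) (at_left (gen_inv b s))"
    using eventually_at_left_real[OF r]
  proof eventually_elim
    case (elim y) then show ?case using below_r[of y s] by simp
  qed
qed simp

lemma b_r_eq: assumes r: "gen_inv b s > t0" shows "b (gen_inv b s) = s"
proof -
  let ?r = "gen_inv b s"
  have "s \<le> Dv ?r"
  proof (rule tendsto_lowerbound)
    show "(Dv \<longlongrightarrow> Dv ?r) (at_right ?r)"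
      using Dv_cont[of ?r] r t0 by (simp add: isCont_def filterlim_at_split)
    have "eventually (\<lambda>y. y \<in> {?r<..<?r+1}) (at_right ?r)"
      by (rule eventually_at_right_real) simp
    then show "eventually (\<lambda>y. s \<le> Dv y) (at_right ?r)"
    proof eventually_elim
      case (elim y)
      then have "y > t0" "y > ?r" using r by auto
      then show ?case using above_r[of s y] b_eq_Dv[of y] by simp
    qed
  qed simp
  then show ?thesis using b_r_le[of s] b_eq_Dv[OF r] r t0 by simp
qed

lemma r_mono: "s1 \<le> s2 \<Longrightarrow> gen_inv b s1 \<le> gen_inv b s2"
  unfolding gen_inv_Sset by (rule cInf_superset_mono[OF Sset_ne Sset_bdd]) (auto simp: Sset_def)

lemma r_ge: assumes "0 \<le> R" "s > b R" shows "gen_inv b s \<ge> R"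
  unfolding gen_inv_Sset
proof (rule cInf_greatest[OF Sset_ne])
  fix x assume x: "x \<in> Sset s"
  show "R \<le> x"
  proof (rule ccontr)
    assume "\<not> R \<le> x"
    then have "b x \<le> b R" using x assms bmono unfolding mono_on_def Sset_def by auto
    then show False using x assms unfolding Sset_def by auto
  qed
qed

lemma g_le: "s > 0 \<Longrightarrow> B (gen_inv b s) \<le> s * gen_inv b s"
proof -
  assume s: "s > 0"
  show ?thesis
  proof (cases "gen_inv b s = 0")
    case True then show ?thesis using B0 by simp
  next
    case False
    then have r: "gen_inv b s > 0" using r_nonneg[of s] by simp
    have "B (gen_inv b s) \<le> gen_inv b s * b (gen_inv b s)" by (rule B_le) (use r in simp)
    also have "\<dots> \<le> gen_inv b s * s" using b_r_le[OF r] r by (simp add: mult_left_mono)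
    finally show ?thesis by (simp add: mult.commute)
  qed
qed

lemma g_nn: "B (gen_inv b s) \<ge> 0" using Bnn[OF r_nonneg] .

lemma g_mono: "s1 \<le> s2 \<Longrightarrow> B (gen_inv b s1) \<le> B (gen_inv b s2)"
  by (rule B_mono[OF r_nonneg r_mono])

lemma g_formula: assumes r: "gen_inv b s > t0"
  shows "B (gen_inv b s) = s * gen_inv b s powr (1 - \<beta>) / \<beta>"
    "ln s = psi (gen_inv b s)"
proof -
  obtain r where rd: "r = gen_inv b s" by simp
  have s: "s = Dv r" using b_r_eq[OF r] b_eq_Dv[OF r] rd by simp
  have rp: "r > 0" "r > t0" using r t0 rd by auto
  have "s * r powr (1 - \<beta>) / \<beta> = N * exp (r powr \<beta>) * (r powr (\<beta> - 1) * r powr (1 - \<beta>))"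
    unfolding s Dv_def using beta by simp
  also have "r powr (\<beta> - 1) * r powr (1 - \<beta>) = 1" using rp by (simp add: powr_add[symmetric])
  finally show "B (gen_inv b s) = s * gen_inv b s powr (1 - \<beta>) / \<beta>" using Bexp[OF rp(2)] rd by simp
  have "ln s = psi r" using s ln_Dv[OF rp(1)] by simp
  then show "ln s = psi (gen_inv b s)" using rd by simp
qed

end


context L begin

definition u :: "real \<Rightarrow> real \<Rightarrow> real" where
  "u \<Lambda> \<tau> = B (gen_inv b (\<Lambda> * exp (\<tau>\<^sup>2 / 2))) * exp (- (\<tau>\<^sup>2 / 2))"

definition ex :: real where "ex = (1 - \<beta>) / \<beta>"

lemma powr_cont1: assumes "\<eta> > 0" shows "\<exists>\<delta>>0. \<forall>q. \<bar>q - 1\<bar> < \<delta> \<longrightarrow> \<bar>q powr ex - 1\<bar> < \<eta>"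
proof -
  have "isCont (\<lambda>q. q powr ex) 1" by (auto intro!: continuous_intros)
  then have "(\<lambda>q. q powr ex) \<midarrow>1\<rightarrow> 1" by (simp add: isCont_def)
  from LIM_D[OF this assms] obtain d where d: "d > 0" "\<forall>x. x \<noteq> 1 \<and> norm (x - 1) < d \<longrightarrow> norm (x powr ex - 1) < \<eta>"
    by blast
  show ?thesis
  proof (intro exI[of _ d] conjI allI impI)
    fix q assume "\<bar>q - 1\<bar> < d"
    then show "\<bar>q powr ex - 1\<bar> < \<eta>" using d assms by (cases "q = 1") auto
  qed (use d in auto)
qed

lemma u_nn: "u \<Lambda> \<tau> \<ge> 0" unfolding u_def using g_nn by simp

lemma u_mono: "l1 \<le> l2 \<Longrightarrow> u l1 \<tau> \<le> u l2 \<tau>"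
  unfolding u_def by (intro mult_right_mono g_mono) auto

lemma core_a: assumes "\<eta> > 0"
  shows "\<exists>M\<ge>1. \<forall>\<Lambda> m \<tau>. 0 < \<Lambda> \<and> \<Lambda> \<le> 1 \<and> 0 < m \<and> M * (1 + \<bar>ln \<Lambda>\<bar>) \<le> m\<^sup>2 \<and> m \<le> \<tau> \<longrightarrow>
      \<bar>u \<Lambda> \<tau> - (\<Lambda> / \<beta>) * (\<tau>\<^sup>2 / 2) powr ex\<bar> \<le> \<eta> * ((\<Lambda> / \<beta>) * (\<tau>\<^sup>2 / 2) powr ex)"
proof -
  obtain \<delta> where \<delta>: "\<delta> > 0" "\<And>q. \<bar>q - 1\<bar> < \<delta> \<Longrightarrow> \<bar>q powr ex - 1\<bar> < \<eta>"
    using powr_cont1[OF assms] by blast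
  define \<eta>1 where "\<eta>1 = min (1/2) (\<delta>/4)"
  have \<eta>1: "\<eta>1 > 0" "\<eta>1 \<le> 1/2" "2 * \<eta>1 < \<delta>" using \<delta> unfolding \<eta>1_def by auto
  obtain R0 where R0: "\<And>x. x \<ge> R0 \<Longrightarrow> \<bar>psi x - x powr \<beta>\<bar> \<le> \<eta>1 * x powr \<beta>"
    using psi_bound[OF \<eta>1(1)] by blast
  define R where "R = max R0 (t0 + 1)"
  have R: "R \<ge> R0" "R > t0" "R > 0" using t0 unfolding R_def by auto
  have bR: "b R > 0" using b_eq_Dv[OF R(2)] Dv_pos[OF R(3)] by simp
  define M where "M = max (2 / \<eta>1) (4 * \<bar>ln (b R)\<bar> + 4)"
  have M: "M \<ge> 2 / \<eta>1" "M \<ge> 4 * \<bar>ln (b R)\<bar> + 4" unfolding M_def by auto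
  show ?thesis
  proof (intro exI[of _ M] conjI allI impI)
    show "1 \<le> M" using M(2) by simp
    fix \<Lambda> m \<tau> assume H: "0 < \<Lambda> \<and> \<Lambda> \<le> 1 \<and> 0 < m \<and> M * (1 + \<bar>ln \<Lambda>\<bar>) \<le> m\<^sup>2 \<and> m \<le> \<tau>"
    then have Lp: "0 < \<Lambda>" "\<Lambda> \<le> 1" and mp: "0 < m" "m \<le> \<tau>" and Mm: "M * (1 + \<bar>ln \<Lambda>\<bar>) \<le> m\<^sup>2" by auto
    have tp: "\<tau> > 0" using mp by simp
    have mt: "m\<^sup>2 \<le> \<tau>\<^sup>2" using mp by (simp add: power_mono)
    have lnL: "ln \<Lambda> \<le> 0" using Lp by simp
    have M0: "M \<ge> 0" using M(2) by (smt (verit) abs_ge_zero)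
    have "M * \<bar>ln \<Lambda>\<bar> \<ge> 0" using M0 by simp
    moreover have "M * (1 + \<bar>ln \<Lambda>\<bar>) = M + M * \<bar>ln \<Lambda>\<bar>" by (simp add: algebra_simps)
    ultimately have "M * \<bar>ln \<Lambda>\<bar> \<le> m\<^sup>2" "M \<le> m\<^sup>2" using Mm M0 by linarith+
    have a1: "(2 / \<eta>1) * \<bar>ln \<Lambda>\<bar> \<le> \<tau>\<^sup>2"
      using \<open>M * \<bar>ln \<Lambda>\<bar> \<le> m\<^sup>2\<close> M(1) mt mult_right_mono[OF M(1), of "\<bar>ln \<Lambda>\<bar>"] by simp
    have a2: "4 * \<bar>ln (b R)\<bar> + 4 \<le> \<tau>\<^sup>2" using \<open>M \<le> m\<^sup>2\<close> M(2) mt by simp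
    have a1': "\<bar>ln \<Lambda>\<bar> \<le> \<eta>1 * (\<tau>\<^sup>2 / 2)"
      using a1 \<eta>1(1) by (simp add: field_simps)
    define s where "s = \<Lambda> * exp (\<tau>\<^sup>2 / 2)"
    define w where "w = \<tau>\<^sup>2 / 2 + ln \<Lambda>"
    have sp: "s > 0" using Lp unfolding s_def by simp
    have lns: "ln s = w" unfolding s_def w_def using Lp by (simp add: ln_mult)
    have w1: "w \<le> \<tau>\<^sup>2 / 2" using lnL unfolding w_def by simp
    have w2: "(1 - \<eta>1) * (\<tau>\<^sup>2 / 2) \<le> w" using a1' lnL unfolding w_def by (simp add: algebra_simps)
    have w3: "w \<ge> \<tau>\<^sup>2 / 4"
    proof -
      have "(1/2) * (\<tau>\<^sup>2 / 2) \<le> (1 - \<eta>1) * (\<tau>\<^sup>2 / 2)"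
        by (rule mult_right_mono) (use \<eta>1 in auto)
      then show ?thesis using w2 by simp
    qed
    have "ln s > ln (b R)" using lns w3 a2 by simp
    then have sbR: "s > b R" using sp bR by (simp add: ln_less_cancel_iff)
    define r where "r = gen_inv b s"
    have rR: "r \<ge> R" unfolding r_def by (rule r_ge[OF _ sbR]) (use R in simp)
    then have rt0: "r > t0" "r > 0" using R by auto
    have rt: "gen_inv b s > t0" using rt0 r_def by simp
    have gf: "B r = s * r powr (1 - \<beta>) / \<beta>" "ln s = psi r"
      using g_formula[OF rt] r_def by simp_all
    have ee: "exp (\<tau>\<^sup>2 / 2) * exp (- (\<tau>\<^sup>2 / 2)) = 1" by (simp add: exp_minus)
    have "u \<Lambda> \<tau> = B r * exp (- (\<tau>\<^sup>2 / 2))" unfolding u_def r_def s_def ..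
    also have "\<dots> = \<Lambda> * (exp (\<tau>\<^sup>2 / 2) * exp (- (\<tau>\<^sup>2 / 2))) * r powr (1 - \<beta>) / \<beta>"
      unfolding gf(1) s_def by (simp add: algebra_simps)
    finally have uval: "u \<Lambda> \<tau> = \<Lambda> * r powr (1 - \<beta>) / \<beta>" unfolding ee by simp
    have pb: "\<bar>psi r - r powr \<beta>\<bar> \<le> \<eta>1 * r powr \<beta>" using R0 rR R by simp
    have rb: "r powr \<beta> > 0" using rt0 by simp
    define q where "q = r powr \<beta> / (\<tau>\<^sup>2 / 2)"
    have t2: "\<tau>\<^sup>2 / 2 > 0" using tp by simp
    have q_up: "(1 - \<eta>1) * r powr \<beta> \<le> w" using pb gf(2) lns by (simp add: algebra_simps abs_le_iff)
    have q_lo: "w \<le> (1 + \<eta>1) * r powr \<beta>" using pb gf(2) lns by (simp add: algebra_simps abs_le_iff)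
    have e2: "2 * \<eta>1 * \<eta>1 \<le> \<eta>1" using \<eta>1 mult_right_mono[of "2*\<eta>1" 1 \<eta>1] by simp
    have qu: "q \<le> 1 + 2 * \<eta>1"
    proof -
      have c: "1 \<le> (1 + 2 * \<eta>1) * (1 - \<eta>1)" using e2 by (simp add: algebra_simps)
      have "r powr \<beta> \<le> ((1 + 2 * \<eta>1) * (1 - \<eta>1)) * r powr \<beta>"
        using mult_right_mono[OF c, of "r powr \<beta>"] rb by simp
      also have "\<dots> = (1 + 2 * \<eta>1) * ((1 - \<eta>1) * r powr \<beta>)" by simp
      also have "\<dots> \<le> (1 + 2 * \<eta>1) * (\<tau>\<^sup>2 / 2)"
        by (rule mult_left_mono) (use q_up w1 \<eta>1 in auto)
      finally show ?thesis unfolding q_def using t2 by (simp add: pos_divide_le_eq)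
    qed
    have ql: "q \<ge> 1 - 2 * \<eta>1"
    proof -
      have c: "(1 - 2 * \<eta>1) * (1 + \<eta>1) \<le> 1 - \<eta>1" using e2 by (simp add: algebra_simps)
      have "(1 + \<eta>1) * ((1 - 2 * \<eta>1) * (\<tau>\<^sup>2 / 2)) = ((1 - 2 * \<eta>1) * (1 + \<eta>1)) * (\<tau>\<^sup>2 / 2)" by simp
      also have "\<dots> \<le> (1 - \<eta>1) * (\<tau>\<^sup>2 / 2)" by (rule mult_right_mono[OF c]) (use t2 in simp)
      also have "\<dots> \<le> (1 + \<eta>1) * r powr \<beta>" using q_lo w2 by simp
      finally have "(1 - 2 * \<eta>1) * (\<tau>\<^sup>2 / 2) \<le> r powr \<beta>"
        using \<eta>1 by (simp add: mult_le_cancel_left_pos)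
      then show ?thesis unfolding q_def using t2 by (simp add: pos_le_divide_eq)
    qed
    have qd: "\<bar>q powr ex - 1\<bar> < \<eta>" using \<delta>(2)[of q] qu ql \<eta>1 by simp
    have qp: "q > 0" unfolding q_def using rb t2 by simp
    have "r powr (1 - \<beta>) = (r powr \<beta>) powr ex" unfolding ex_def using beta rt0
      by (simp add: powr_powr)
    also have "r powr \<beta> = q * (\<tau>\<^sup>2 / 2)" unfolding q_def using t2 by simp
    also have "(q * (\<tau>\<^sup>2 / 2)) powr ex = q powr ex * (\<tau>\<^sup>2 / 2) powr ex"
      by (rule powr_mult)
    finally have "u \<Lambda> \<tau> - (\<Lambda> / \<beta>) * (\<tau>\<^sup>2 / 2) powr ex = ((\<Lambda> / \<beta>) * (\<tau>\<^sup>2 / 2) powr ex) * (q powr ex - 1)"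
      unfolding uval by (simp add: algebra_simps diff_divide_distrib)
    moreover have "(\<Lambda> / \<beta>) * (\<tau>\<^sup>2 / 2) powr ex \<ge> 0" using Lp beta by simp
    ultimately show "\<bar>u \<Lambda> \<tau> - (\<Lambda> / \<beta>) * (\<tau>\<^sup>2 / 2) powr ex\<bar> \<le> \<eta> * ((\<Lambda> / \<beta>) * (\<tau>\<^sup>2 / 2) powr ex)"
    proof -
      fix P assume eq: "u \<Lambda> \<tau> - P = P * (q powr ex - 1)" and P: "P \<ge> 0"
      have "\<bar>u \<Lambda> \<tau> - P\<bar> = P * \<bar>q powr ex - 1\<bar>" unfolding eq using P by (simp add: abs_mult)
      also have "\<dots> \<le> P * \<eta>" using qd P by (intro mult_left_mono) auto
      finally show "\<bar>u \<Lambda> \<tau> - P\<bar> \<le> \<eta> * P" by (simp add: mult.commute)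
    qed
  qed
qed


lemma core_b: "\<exists>R\<ge>0. \<forall>\<Lambda> m \<tau>. 0 < \<Lambda> \<and> \<Lambda> \<le> 1 \<and> 0 \<le> \<tau> \<and> \<tau> \<le> m \<longrightarrow>
      u \<Lambda> \<tau> \<le> \<Lambda> * (R + m powr (2 / \<beta>))"
proof -
  obtain R0 where R0: "\<And>x. x \<ge> R0 \<Longrightarrow> \<bar>psi x - x powr \<beta>\<bar> \<le> (1/2) * x powr \<beta>"
    using psi_bound[of "1/2"] by auto
  define R where "R = max R0 (t0 + 1)"
  have R: "R \<ge> R0" "R > t0" "R > 0" using t0 unfolding R_def by auto
  show ?thesis
  proof (intro exI[of _ R] conjI allI impI)
    show "0 \<le> R" using R by simp
    fix \<Lambda> m \<tau> :: real assume H: "0 < \<Lambda> \<and> \<Lambda> \<le> 1 \<and> 0 \<le> \<tau> \<and> \<tau> \<le> m"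
    then have Lp: "0 < \<Lambda>" "\<Lambda> \<le> 1" and tm: "0 \<le> \<tau>" "\<tau> \<le> m" by auto
    define s where "s = \<Lambda> * exp (\<tau>\<^sup>2 / 2)"
    define sS where "sS = \<Lambda> * exp (m\<^sup>2 / 2)"
    have sp: "s > 0" unfolding s_def using Lp by simp
    have "\<tau>\<^sup>2 \<le> m\<^sup>2" using tm by (simp add: power_mono)
    then have s_le: "s \<le> sS" unfolding s_def sS_def using Lp by simp
    have "u \<Lambda> \<tau> = B (gen_inv b s) * exp (- (\<tau>\<^sup>2 / 2))" unfolding u_def s_def ..
    also have "\<dots> \<le> (s * gen_inv b s) * exp (- (\<tau>\<^sup>2 / 2))"
      by (rule mult_right_mono[OF g_le[OF sp]]) simp
    also have "\<dots> = \<Lambda> * gen_inv b s" unfolding s_def by (simp add: exp_minus field_simps)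
    also have "\<dots> \<le> \<Lambda> * gen_inv b sS" using r_mono[OF s_le] Lp by simp
    also have "gen_inv b sS \<le> R + m powr (2 / \<beta>)"
    proof (cases "gen_inv b sS \<le> R")
      case True then show ?thesis using powr_ge_zero[of m "2/\<beta>"] by linarith
    next
      case False
      obtain r where rd: "r = gen_inv b sS" by simp
      have rR: "r > R" using False rd by simp
      then have rt: "gen_inv b sS > t0" using R rd by simp
      have lnss: "ln sS = psi r" using g_formula(2)[OF rt] rd by simp
      have "\<bar>psi r - r powr \<beta>\<bar> \<le> (1/2) * r powr \<beta>" using R0 rR R by simp
      then have "r powr \<beta> / 2 \<le> psi r" using abs_ge_minus_self[of "psi r - r powr \<beta>"] by linarith
      moreover have "ln sS \<le> m\<^sup>2 / 2" unfolding sS_def using Lp by (simp add: ln_mult)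
      ultimately have rb: "r powr \<beta> \<le> m\<^sup>2" using lnss by simp
      have rp: "r > 0" using rR R by simp
      have "r = (r powr \<beta>) powr (1 / \<beta>)" using rp beta by (simp add: powr_powr)
      also have "\<dots> \<le> (m\<^sup>2) powr (1 / \<beta>)" by (rule powr_mono2) (use beta rb in auto)
      also have "\<dots> = m powr (2 / \<beta>)"
      proof -
        have "m\<^sup>2 = m powr 2" using tm by (simp add: powr_numeral)
        then have "(m\<^sup>2) powr (1 / \<beta>) = m powr (2 * (1 / \<beta>))" by (simp only: powr_powr)
        then show ?thesis by simp
      qed
      finally show ?thesis using rd R by simp
    qed
    then have "\<Lambda> * gen_inv b sS \<le> \<Lambda> * (R + m powr (2 / \<beta>))" using Lp by simp
    finally show "u \<Lambda> \<tau> \<le> \<Lambda> * (R + m powr (2 / \<beta>))" .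
  qed
qed

end


context L begin

lemma main_int:
  assumes A: "\<And>\<tau>. \<tau> > 0 \<Longrightarrow> (A has_real_derivative (\<tau>\<^sup>2 / 2) powr ex) (at \<tau>)"
    and m: "0 < m" "m \<le> t"
  shows "((\<lambda>\<tau>. (\<Lambda> / \<beta>) * (\<tau>\<^sup>2 / 2) powr ex) has_integral (\<Lambda> / \<beta>) * (A t - A m)) {m..t}"
proof -
  have "((\<lambda>\<tau>. (\<tau>\<^sup>2 / 2) powr ex) has_integral (A t - A m)) {m..t}"
  proof (rule fundamental_theorem_of_calculus[OF m(2)])
    fix x assume "x \<in> {m..t}"
    then have "x > 0" using m by auto
    then show "(A has_vector_derivative (x\<^sup>2 / 2) powr ex) (at x within {m..t})"
      using A[of x] by (simp add: has_real_derivative_iff_has_vector_derivative has_vector_derivative_at_within)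
  qed
  then show ?thesis by (rule has_integral_mult_right)
qed

lemma abs_approx: fixes x P :: real assumes h: "\<bar>x - P\<bar> \<le> \<eta> * P" shows "(1 - \<eta>) * P \<le> x" "x \<le> (1 + \<eta>) * P"
proof -
  have a: "x - P \<le> \<eta> * P" "-(x - P) \<le> \<eta> * P" using h abs_le_D1 abs_le_D2 by auto
  have e1: "(1 - \<eta>) * P = P - \<eta> * P" by (simp add: algebra_simps)
  have e2: "(1 + \<eta>) * P = P + \<eta> * P" by (simp add: algebra_simps)
  show "(1 - \<eta>) * P \<le> x" using a e1 by linarith
  show "x \<le> (1 + \<eta>) * P" using a e2 by linarith
qed

lemma lam_int: "t > 0 \<Longrightarrow> (u (lam t) has_integral sqrt (2 * pi)) {0..t}"
  using lam[of t] unfolding u_def by auto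

lemma bound_lower:
  assumes A: "\<And>\<tau>. \<tau> > 0 \<Longrightarrow> (A has_real_derivative (\<tau>\<^sup>2 / 2) powr ex) (at \<tau>)"
    and core: "\<And>\<tau>. m \<le> \<tau> \<Longrightarrow> \<bar>u \<Lambda> \<tau> - (\<Lambda> / \<beta>) * (\<tau>\<^sup>2 / 2) powr ex\<bar> \<le> \<eta> * ((\<Lambda> / \<beta>) * (\<tau>\<^sup>2 / 2) powr ex)"
    and m: "0 < m" "m \<le> t" and L: "\<Lambda> \<le> lam t"
  shows "(1 - \<eta>) * ((\<Lambda> / \<beta>) * (A t - A m)) \<le> sqrt (2 * pi)"
proof -
  have i1: "((\<lambda>\<tau>. (1 - \<eta>) * ((\<Lambda> / \<beta>) * (\<tau>\<^sup>2 / 2) powr ex)) has_integral (1 - \<eta>) * ((\<Lambda> / \<beta>) * (A t - A m))) {m..t}"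
    by (rule has_integral_mult_right[OF main_int[OF A m]])
  have i2: "((\<lambda>\<tau>. if \<tau> \<in> {m..t} then (1 - \<eta>) * ((\<Lambda> / \<beta>) * (\<tau>\<^sup>2 / 2) powr ex) else 0)
      has_integral (1 - \<eta>) * ((\<Lambda> / \<beta>) * (A t - A m))) {0..t}"
    by (rule has_integral_restrict_closed_subinterval[of _ _ m t 0 t, unfolded cbox_interval, OF i1]) (use m in auto)
  show ?thesis
  proof (rule has_integral_le[OF i2 lam_int])
    show "t > 0" using m by simp
    fix \<tau> assume "\<tau> \<in> {0..t}"
    show "(if \<tau> \<in> {m..t} then (1 - \<eta>) * ((\<Lambda> / \<beta>) * (\<tau>\<^sup>2 / 2) powr ex) else 0) \<le> u (lam t) \<tau>"
    proof (cases "\<tau> \<in> {m..t}")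
      case True
      then have "(1 - \<eta>) * ((\<Lambda> / \<beta>) * (\<tau>\<^sup>2 / 2) powr ex) \<le> u \<Lambda> \<tau>"
        using abs_approx(1)[OF core[of \<tau>]] by auto
      also have "\<dots> \<le> u (lam t) \<tau>" by (rule u_mono[OF L])
      finally show ?thesis using True by simp
    qed (auto simp: u_nn)
  qed
qed

lemma bound_upper:
  assumes A: "\<And>\<tau>. \<tau> > 0 \<Longrightarrow> (A has_real_derivative (\<tau>\<^sup>2 / 2) powr ex) (at \<tau>)"
    and core: "\<And>\<tau>. m \<le> \<tau> \<Longrightarrow> \<bar>u \<Lambda> \<tau> - (\<Lambda> / \<beta>) * (\<tau>\<^sup>2 / 2) powr ex\<bar> \<le> \<eta> * ((\<Lambda> / \<beta>) * (\<tau>\<^sup>2 / 2) powr ex)"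
    and coreb: "\<And>\<tau>. 0 \<le> \<tau> \<Longrightarrow> \<tau> \<le> m \<Longrightarrow> u \<Lambda> \<tau> \<le> K"
    and m: "0 < m" "m \<le> t" and L: "lam t \<le> \<Lambda>" and \<eta>: "\<eta> \<ge> 0" and Lp: "\<Lambda> > 0"
  shows "sqrt (2 * pi) \<le> K * m + (1 + \<eta>) * ((\<Lambda> / \<beta>) * (A t - A m))"
proof -
  have i1: "((\<lambda>\<tau>. (1 + \<eta>) * ((\<Lambda> / \<beta>) * (\<tau>\<^sup>2 / 2) powr ex)) has_integral (1 + \<eta>) * ((\<Lambda> / \<beta>) * (A t - A m))) {m..t}"
    by (rule has_integral_mult_right[OF main_int[OF A m]])
  have i2: "((\<lambda>\<tau>. if \<tau> \<in> {m..t} then (1 + \<eta>) * ((\<Lambda> / \<beta>) * (\<tau>\<^sup>2 / 2) powr ex) else 0)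
      has_integral (1 + \<eta>) * ((\<Lambda> / \<beta>) * (A t - A m))) {0..t}"
    by (rule has_integral_restrict_closed_subinterval[of _ _ m t 0 t, unfolded cbox_interval, OF i1]) (use m in auto)
  have c0: "((\<lambda>_. K) has_integral K * (m - 0)) {0..m}"
    using has_integral_const_real[of K 0 m] m by (simp add: mult.commute)
  have i3: "((\<lambda>\<tau>. if \<tau> \<in> {0..m} then K else 0) has_integral K * m) {0..t}"
    using has_integral_restrict_closed_subinterval[of "\<lambda>_. K" "K * (m - 0)" 0 m 0 t, unfolded cbox_interval, OF c0] m by auto
  note i4 = has_integral_add[OF i3 i2]
  have "sqrt (2 * pi) \<le> K * m + (1 + \<eta>) * ((\<Lambda> / \<beta>) * (A t - A m))"
  proof (rule has_integral_le[OF lam_int i4])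
    show "t > 0" using m by simp
    fix \<tau> assume tau: "\<tau> \<in> {0..t}"
    have P0: "(\<Lambda> / \<beta>) * (\<tau>\<^sup>2 / 2) powr ex \<ge> 0" using beta Lp by simp
    show "u (lam t) \<tau> \<le> (if \<tau> \<in> {0..m} then K else 0) + (if \<tau> \<in> {m..t} then (1 + \<eta>) * ((\<Lambda> / \<beta>) * (\<tau>\<^sup>2 / 2) powr ex) else 0)"
    proof (cases "\<tau> \<le> m")
      case True
      have "u (lam t) \<tau> \<le> K" using u_mono[OF L] coreb[of \<tau>] tau True by (meson atLeastAtMost_iff order_trans)
      moreover have "0 \<le> (if \<tau> \<in> {m..t} then (1 + \<eta>) * ((\<Lambda> / \<beta>) * (\<tau>\<^sup>2 / 2) powr ex) else 0)"
        using mult_nonneg_nonneg[OF _ P0, of "1+\<eta>"] \<eta> by auto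
      ultimately show ?thesis using True tau by simp
    next
      case False
      have "u (lam t) \<tau> \<le> (1 + \<eta>) * ((\<Lambda> / \<beta>) * (\<tau>\<^sup>2 / 2) powr ex)"
        using u_mono[OF L, of \<tau>] abs_approx(2)[OF core[of \<tau>]] False by auto
      then show ?thesis using False tau by simp
    qed
  qed
  then show ?thesis .
qed

end



lemma ratio_lim:
  fixes f D :: "real \<Rightarrow> real"
  assumes Dp: "eventually (\<lambda>t. D t > 0) at_top" and fp: "eventually (\<lambda>t. f t > 0) at_top"
    and up: "\<And>\<theta>. \<theta> > 1 \<Longrightarrow> eventually (\<lambda>t. f t \<le> \<theta> * D t) at_top"
    and lo: "\<And>\<theta>. 0 < \<theta> \<Longrightarrow> \<theta> < 1 \<Longrightarrow> eventually (\<lambda>t. \<theta> * D t \<le> f t) at_top"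
  shows "((\<lambda>t. f t / D t) \<longlongrightarrow> 1) at_top"
proof (rule order_tendstoI)
  fix a :: real assume a: "a < 1"
  show "eventually (\<lambda>t. a < f t / D t) at_top"
  proof (cases "a \<le> 0")
    case True
    from Dp fp show ?thesis
    proof eventually_elim
      case (elim t)
      then have "f t / D t > 0" by simp
      then show ?case using True by linarith
    qed
  next
    case False
    define \<theta> where "\<theta> = (1 + a) / 2"
    have th: "0 < \<theta>" "\<theta> < 1" "a < \<theta>" using a False unfolding \<theta>_def by auto
    from Dp lo[OF th(1,2)] show ?thesis
    proof eventually_elim
      case (elim t)
      then have "\<theta> \<le> f t / D t" by (simp add: pos_le_divide_eq)
      then show ?case using th by simp
    qed
  qed
next
  fix a :: real assume a: "a > 1"
  define \<theta> where "\<theta> = (1 + a) / 2"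
  have th: "1 < \<theta>" "\<theta> < a" using a unfolding \<theta>_def by auto
  from Dp up[OF th(1)] show "eventually (\<lambda>t. f t / D t < a) at_top"
  proof eventually_elim
    case (elim t)
    then have "f t / D t \<le> \<theta>" by (simp add: pos_divide_le_eq)
    then show ?case using th by simp
  qed
qed

lemma powr_sq: "x \<ge> 0 \<Longrightarrow> (x powr a)\<^sup>2 = x powr (2 * a)" for x a :: real
  by (simp add: power2_eq_square powr_add[symmetric])

context L begin

lemma lam_pos: "eventually (\<lambda>t. lam t > 0) at_top"
  using eventually_gt_at_top[of 0] by eventually_elim (use lam in auto)

definition pp :: real where "pp = 2 / \<beta> - 1"

lemma A_lt_deriv:
  assumes b2: "\<beta> < 2" and tp: "\<tau> > 0"
  shows "((\<lambda>\<tau>. 2 powr (-ex) * \<tau> powr pp / pp) has_real_derivative (\<tau>\<^sup>2 / 2) powr ex) (at \<tau>)"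
proof -
  have p0: "pp > 0" using b2 beta unfolding pp_def by (simp add: field_simps)
  have pe: "pp - 1 = 2 * ex" unfolding pp_def ex_def using beta by (simp add: field_simps)
  have "(\<tau>\<^sup>2 / 2) powr ex = (\<tau>\<^sup>2) powr ex / 2 powr ex" by (rule powr_divide)
  also have "(\<tau>\<^sup>2) powr ex = \<tau> powr (2 * ex)"
  proof -
    have "\<tau>\<^sup>2 = \<tau> powr 2" using tp by (simp add: powr_numeral)
    then show ?thesis by (simp add: powr_powr)
  qed
  also have "\<tau> powr (2 * ex) / 2 powr ex = 2 powr (-ex) * (pp * \<tau> powr (pp - 1)) / pp"
    using p0 pe by (simp add: powr_minus_divide)
  finally have *: "(\<tau>\<^sup>2 / 2) powr ex = 2 powr (-ex) * (pp * \<tau> powr (pp - 1)) / pp" .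
  show ?thesis unfolding * using tp by (auto intro!: derivative_eq_intros)
qed

lemma A_eq_deriv:
  assumes b2: "\<beta> = 2" and tp: "\<tau> > 0"
  shows "((\<lambda>\<tau>. sqrt 2 * ln \<tau>) has_real_derivative (\<tau>\<^sup>2 / 2) powr ex) (at \<tau>)"
proof -
  have e: "ex = - (1/2)" using b2 unfolding ex_def by simp
  have "(\<tau>\<^sup>2 / 2) powr ex = 1 / (\<tau>\<^sup>2 / 2) powr (1/2)" unfolding e by (simp add: powr_minus_divide)
  also have "(\<tau>\<^sup>2 / 2) powr (1/2) = sqrt (\<tau>\<^sup>2 / 2)" by (rule powr_half_sqrt) simp
  also have "sqrt (\<tau>\<^sup>2 / 2) = \<tau> / sqrt 2" using tp by (simp add: real_sqrt_divide)
  finally have *: "(\<tau>\<^sup>2 / 2) powr ex = sqrt 2 * (1 / \<tau>)" by simp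
  show ?thesis unfolding * using tp by (auto intro!: derivative_eq_intros)
qed

lemma const_id: assumes b2: "\<beta> < 2" shows "c_beta \<beta> * 2 powr (-ex) / (\<beta> * pp) = sqrt (2 * pi)"
proof -
  have bp: "\<beta> * pp = 2 - \<beta>" unfolding pp_def using beta by (simp add: field_simps)
  have "c_beta \<beta> * 2 powr (-ex) = 2 powr (1/\<beta> - 1/2) * 2 powr (-ex) * sqrt pi * (2 - \<beta>)"
    unfolding c_beta_def using b2 by simp
  also have "2 powr (1/\<beta> - 1/2) * 2 powr (-ex) = 2 powr (1/2)"
    unfolding powr_add[symmetric] ex_def using beta by (simp add: field_simps)
  also have "(2::real) powr (1/2) = sqrt 2" by (simp add: powr_half_sqrt)
  finally show ?thesis unfolding bp using b2 by (simp add: real_sqrt_mult)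
qed

end


context L begin

lemma lt_upper: assumes b2: "\<beta> < 2" and th: "\<theta> > 1"
  shows "eventually (\<lambda>t. lam t \<le> \<theta> * (c_beta \<beta> * t powr (1 - 2/\<beta>))) at_top"
proof -
  define c where "c = c_beta \<beta>"
  have c0: "c > 0" unfolding c_def c_beta_def using b2 beta by simp
  have p0: "pp > 0" using b2 beta unfolding pp_def by (simp add: field_simps)
  have mp: "1 - 2/\<beta> = -pp" unfolding pp_def by simp
  define \<eta> where "\<eta> = (\<theta> - 1) / (2 * \<theta>)"
  have \<eta>: "\<eta> > 0" "(1 - \<eta>) * \<theta> = (\<theta> + 1) / 2" using th by (auto simp: \<eta>_def field_simps)
  obtain M where M: "M \<ge> 1" and Mc: "\<forall>\<Lambda> m \<tau>. 0 < \<Lambda> \<and> \<Lambda> \<le> 1 \<and> 0 < m \<and> M * (1 + \<bar>ln \<Lambda>\<bar>) \<le> m\<^sup>2 \<and> m \<le> \<tau> \<longrightarrow>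
      \<bar>u \<Lambda> \<tau> - (\<Lambda> / \<beta>) * (\<tau>\<^sup>2 / 2) powr ex\<bar> \<le> \<eta> * ((\<Lambda> / \<beta>) * (\<tau>\<^sup>2 / 2) powr ex)"
    using core_a[OF \<eta>(1)] by blast
  define A where "A = (\<lambda>\<tau>. 2 powr (-ex) * \<tau> powr pp / pp)"
  have Ad: "\<And>\<tau>. \<tau> > 0 \<Longrightarrow> (A has_real_derivative (\<tau>\<^sup>2 / 2) powr ex) (at \<tau>)"
    unfolding A_def by (rule A_lt_deriv[OF b2])
  define C where "C = \<bar>ln (\<theta> * c)\<bar>"
  have C0: "C \<ge> 0" unfolding C_def by simp
  have E1: "eventually (\<lambda>t::real. t > 1) at_top" by (rule eventually_gt_at_top)
  have "((\<lambda>t. \<theta> * c * t powr (-pp)) \<longlongrightarrow> 0) at_top" using p0 by real_asymp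
  then have E2: "eventually (\<lambda>t. \<theta> * c * t powr (-pp) < 1) at_top" by (rule order_tendstoD) simp
  have E3: "eventually (\<lambda>t. M * (1 + C + pp * ln t) \<le> t) at_top" using M C0 p0 by real_asymp
  have "((\<lambda>t. (1 - \<eta>) * \<theta> * (1 - t powr (-pp/2))) \<longlongrightarrow> (1 - \<eta>) * \<theta>) at_top" using p0 by real_asymp
  moreover have "(1 - \<eta>) * \<theta> > 1" using \<eta>(2) th by simp
  ultimately have E4: "eventually (\<lambda>t. (1 - \<eta>) * \<theta> * (1 - t powr (-pp/2)) > 1) at_top"
    by (rule order_tendstoD)
  from E1 E2 E3 E4 show ?thesis
  proof eventually_elim
    case (elim t)
    define \<Lambda> where "\<Lambda> = \<theta> * c * t powr (-pp)"
    define m where "m = t powr (1/2)"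
    have tp: "t > 0" using elim by simp
    have Lp: "\<Lambda> > 0" "\<Lambda> \<le> 1" unfolding \<Lambda>_def using elim c0 th by auto
    have "ln \<Lambda> = ln (\<theta> * c) - pp * ln t" unfolding \<Lambda>_def using c0 th tp by (simp add: ln_mult ln_powr)
    moreover have "pp * ln t \<ge> 0" using p0 elim by simp
    ultimately have lnL: "\<bar>ln \<Lambda>\<bar> \<le> C + pp * ln t" unfolding C_def by linarith
    have m0: "m > 0" unfolding m_def using tp by simp
    have m2: "m\<^sup>2 = t" unfolding m_def using tp by (simp add: powr_sq)
    have mt: "m \<le> t" unfolding m_def using powr_mono[of "1/2" 1 t] elim by simp
    have "M * (1 + \<bar>ln \<Lambda>\<bar>) \<le> M * (1 + C + pp * ln t)" using lnL M by (simp add: mult_left_mono)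
    then have Mm: "M * (1 + \<bar>ln \<Lambda>\<bar>) \<le> m\<^sup>2" using elim m2 by simp
    show ?case
    proof (rule ccontr)
      assume "\<not> ?case"
      then have L: "\<Lambda> \<le> lam t" unfolding \<Lambda>_def c_def mp by simp
      have core: "\<And>\<tau>. m \<le> \<tau> \<Longrightarrow> \<bar>u \<Lambda> \<tau> - (\<Lambda> / \<beta>) * (\<tau>\<^sup>2 / 2) powr ex\<bar> \<le> \<eta> * ((\<Lambda> / \<beta>) * (\<tau>\<^sup>2 / 2) powr ex)"
        using Mc Lp m0 Mm by blast
      have bl: "(1 - \<eta>) * ((\<Lambda> / \<beta>) * (A t - A m)) \<le> sqrt (2 * pi)"
        by (rule bound_lower[OF Ad core m0 mt L])
      have mpp: "m powr pp = t powr (pp / 2)" unfolding m_def by (simp add: powr_powr)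
      have "(\<Lambda> / \<beta>) * (A t - A m) = \<theta> * (c * 2 powr (-ex) / (\<beta> * pp)) * (t powr (-pp) * t powr pp - t powr (-pp) * t powr (pp/2))"
        unfolding \<Lambda>_def A_def mpp using p0 beta by (simp add: field_simps)
      also have "t powr (-pp) * t powr pp = 1" using tp by (simp add: powr_add[symmetric])
      also have "t powr (-pp) * t powr (pp/2) = t powr (-pp/2)" using tp by (simp add: powr_add[symmetric])
      also have "c * 2 powr (-ex) / (\<beta> * pp) = sqrt (2 * pi)" unfolding c_def by (rule const_id[OF b2])
      finally have "(\<Lambda> / \<beta>) * (A t - A m) = \<theta> * sqrt (2 * pi) * (1 - t powr (-pp/2))" by simp
      then have "(1 - \<eta>) * (\<theta> * sqrt (2 * pi) * (1 - t powr (-pp/2))) \<le> sqrt (2 * pi)"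
        using bl by simp
      moreover have "(1 - \<eta>) * (\<theta> * sqrt (2 * pi) * (1 - t powr (-pp/2))) = ((1 - \<eta>) * \<theta> * (1 - t powr (-pp/2))) * sqrt (2 * pi)"
        by (simp add: algebra_simps)
      ultimately have "((1 - \<eta>) * \<theta> * (1 - t powr (-pp/2))) * sqrt (2 * pi) \<le> 1 * sqrt (2 * pi)"
        by simp
      then have "(1 - \<eta>) * \<theta> * (1 - t powr (-pp/2)) \<le> 1" by (rule mult_right_le_imp_le) simp
      then show False using elim by simp
    qed
  qed
qed


lemma lt_lower: assumes b2: "\<beta> < 2" and th: "\<theta> > 0" "\<theta> < 1"
  shows "eventually (\<lambda>t. \<theta> * (c_beta \<beta> * t powr (1 - 2/\<beta>)) \<le> lam t) at_top"
proof -
  define c where "c = c_beta \<beta>"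
  have c0: "c > 0" unfolding c_def c_beta_def using b2 beta by simp
  have p0: "pp > 0" using b2 beta unfolding pp_def by (simp add: field_simps)
  have mp: "1 - 2/\<beta> = -pp" unfolding pp_def by simp
  define \<eta> where "\<eta> = (1 - \<theta>) / (2 * \<theta>)"
  have \<eta>: "\<eta> > 0" "(1 + \<eta>) * \<theta> = (\<theta> + 1) / 2" using th by (auto simp: \<eta>_def field_simps)
  obtain M where M: "M \<ge> 1" and Mc: "\<forall>\<Lambda> m \<tau>. 0 < \<Lambda> \<and> \<Lambda> \<le> 1 \<and> 0 < m \<and> M * (1 + \<bar>ln \<Lambda>\<bar>) \<le> m\<^sup>2 \<and> m \<le> \<tau> \<longrightarrow>
      \<bar>u \<Lambda> \<tau> - (\<Lambda> / \<beta>) * (\<tau>\<^sup>2 / 2) powr ex\<bar> \<le> \<eta> * ((\<Lambda> / \<beta>) * (\<tau>\<^sup>2 / 2) powr ex)"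
    using core_a[OF \<eta>(1)] by blast
  obtain R where R: "R \<ge> 0" and Rc: "\<forall>\<Lambda> m \<tau>. 0 < \<Lambda> \<and> \<Lambda> \<le> 1 \<and> 0 \<le> \<tau> \<and> \<tau> \<le> m \<longrightarrow>
      u \<Lambda> \<tau> \<le> \<Lambda> * (R + m powr (2 / \<beta>))"
    using core_b by blast
  define A where "A = (\<lambda>\<tau>. 2 powr (-ex) * \<tau> powr pp / pp)"
  have Ad: "\<And>\<tau>. \<tau> > 0 \<Longrightarrow> (A has_real_derivative (\<tau>\<^sup>2 / 2) powr ex) (at \<tau>)"
    unfolding A_def by (rule A_lt_deriv[OF b2])
  define C where "C = \<bar>ln (\<theta> * c)\<bar>"
  have C0: "C \<ge> 0" unfolding C_def by simp
  define q where "q = 2 / \<beta>"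
  have q0: "q > 0" unfolding q_def using beta by simp
  define \<gamma> where "\<gamma> = pp / (2 * q + 4)"
  have g0: "\<gamma> > 0" unfolding \<gamma>_def using p0 q0 by simp
  have h: "pp \<le> 2 * q + 4" using q0 unfolding pp_def q_def[symmetric] by simp
  have g1: "\<gamma> \<le> 1" unfolding \<gamma>_def using h q0 by (simp add: divide_le_eq)
  define a1 where "a1 = \<gamma> - pp"
  define a2 where "a2 = \<gamma> * q + \<gamma> - pp"
  have k1: "pp * (q + 1) < pp * (2 * q + 4)" using p0 q0 by (intro mult_strict_left_mono) auto
  have g2: "\<gamma> * (q + 1) < pp"
  proof -
    have "\<gamma> * (q + 1) = pp * (q + 1) / (2 * q + 4)" unfolding \<gamma>_def by simp
    also have "\<dots> < pp" using k1 q0 by (simp add: pos_divide_less_eq)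
    finally show ?thesis .
  qed
  have gq: "\<gamma> * q \<ge> 0" using g0 q0 by simp
  have a2: "a2 < 0" unfolding a2_def using g2 by (simp add: algebra_simps)
  have a1: "a1 < 0" unfolding a1_def using g2 gq by (simp add: algebra_simps)
  define D where "D = sqrt (2 * pi) * (1 - (1 + \<eta>) * \<theta>)"
  have D0: "D > 0" unfolding D_def using \<eta>(2) th by simp
  have E1: "eventually (\<lambda>t::real. t > 1) at_top" by (rule eventually_gt_at_top)
  have "((\<lambda>t. \<theta> * c * t powr (-pp)) \<longlongrightarrow> 0) at_top" using p0 by real_asymp
  then have E2: "eventually (\<lambda>t. \<theta> * c * t powr (-pp) < 1) at_top" by (rule order_tendstoD) simp
  have E3: "eventually (\<lambda>t. M * (1 + C + pp * ln t) \<le> t powr (2 * \<gamma>)) at_top" using M C0 p0 g0 by real_asymp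
  have l1: "((\<lambda>t::real. t powr a1) \<longlongrightarrow> 0) at_top" by (rule tendsto_neg_powr[OF a1 filterlim_ident])
  have l2: "((\<lambda>t::real. t powr a2) \<longlongrightarrow> 0) at_top" by (rule tendsto_neg_powr[OF a2 filterlim_ident])
  have "((\<lambda>t. \<theta> * c * (R * t powr a1 + t powr a2)) \<longlongrightarrow> \<theta> * c * (R * 0 + 0)) at_top"
    by (intro tendsto_intros l1 l2)
  then have "((\<lambda>t. \<theta> * c * (R * t powr a1 + t powr a2)) \<longlongrightarrow> 0) at_top" by simp
  then have E5: "eventually (\<lambda>t. \<theta> * c * (R * t powr a1 + t powr a2) < D) at_top"
    using D0 by (rule order_tendstoD)
  from E1 E2 E3 E5 show ?thesis
  proof eventually_elim
    case (elim t)
    define \<Lambda> where "\<Lambda> = \<theta> * c * t powr (-pp)"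
    define m where "m = t powr \<gamma>"
    have tp: "t > 0" using elim by simp
    have Lp: "\<Lambda> > 0" "\<Lambda> \<le> 1" unfolding \<Lambda>_def using elim c0 th by auto
    have "ln \<Lambda> = ln (\<theta> * c) - pp * ln t" unfolding \<Lambda>_def using c0 th tp by (simp add: ln_mult ln_powr)
    moreover have "pp * ln t \<ge> 0" using p0 elim by simp
    ultimately have lnL: "\<bar>ln \<Lambda>\<bar> \<le> C + pp * ln t" unfolding C_def by linarith
    have m0: "m > 0" unfolding m_def using tp by simp
    have m2: "m\<^sup>2 = t powr (2 * \<gamma>)" unfolding m_def using tp by (simp add: powr_sq)
    have mt: "m \<le> t" unfolding m_def using powr_mono[of \<gamma> 1 t] elim g1 by simp
    have "M * (1 + \<bar>ln \<Lambda>\<bar>) \<le> M * (1 + C + pp * ln t)" using lnL M by (simp add: mult_left_mono)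
    then have Mm: "M * (1 + \<bar>ln \<Lambda>\<bar>) \<le> m\<^sup>2" using elim m2 by simp
    have mq: "m powr (2 / \<beta>) = t powr (\<gamma> * q)" unfolding m_def q_def by (simp add: powr_powr)
    define K where "K = \<Lambda> * (R + m powr (2 / \<beta>))"
    have Km: "K * m = \<theta> * c * (R * t powr a1 + t powr a2)"
    proof -
      have "K * m = \<theta> * c * (R * (t powr (-pp) * t powr \<gamma>) + t powr (-pp) * t powr (\<gamma> * q) * t powr \<gamma>)"
        unfolding K_def \<Lambda>_def by (simp add: algebra_simps mq m_def[symmetric])
      also have "t powr (-pp) * t powr \<gamma> = t powr a1" unfolding a1_def by (simp add: powr_add[symmetric])
      also have "t powr (-pp) * t powr (\<gamma> * q) * t powr \<gamma> = t powr a2" unfolding a2_def by (simp add: powr_add[symmetric] algebra_simps)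
      finally show ?thesis .
    qed
    show ?case
    proof (rule ccontr)
      assume "\<not> ?case"
      then have L: "lam t \<le> \<Lambda>" unfolding \<Lambda>_def c_def mp by simp
      have core: "\<And>\<tau>. m \<le> \<tau> \<Longrightarrow> \<bar>u \<Lambda> \<tau> - (\<Lambda> / \<beta>) * (\<tau>\<^sup>2 / 2) powr ex\<bar> \<le> \<eta> * ((\<Lambda> / \<beta>) * (\<tau>\<^sup>2 / 2) powr ex)"
        using Mc Lp m0 Mm by blast
      have coreb: "\<And>\<tau>. 0 \<le> \<tau> \<Longrightarrow> \<tau> \<le> m \<Longrightarrow> u \<Lambda> \<tau> \<le> K"
        using Rc Lp unfolding K_def by blast
      have bu: "sqrt (2 * pi) \<le> K * m + (1 + \<eta>) * ((\<Lambda> / \<beta>) * (A t - A m))"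
        by (rule bound_upper[OF Ad core coreb m0 mt L less_imp_le[OF \<eta>(1)] Lp(1)])
      have mpp: "m powr pp \<ge> 0" by simp
      have "(\<Lambda> / \<beta>) * (A t - A m) = \<theta> * (c * 2 powr (-ex) / (\<beta> * pp)) * (t powr (-pp) * t powr pp - t powr (-pp) * m powr pp)"
        unfolding \<Lambda>_def A_def using p0 beta by (simp add: field_simps)
      also have "t powr (-pp) * t powr pp = 1" using tp by (simp add: powr_add[symmetric])
      also have "c * 2 powr (-ex) / (\<beta> * pp) = sqrt (2 * pi)" unfolding c_def by (rule const_id[OF b2])
      finally have "(\<Lambda> / \<beta>) * (A t - A m) = \<theta> * sqrt (2 * pi) * (1 - t powr (-pp) * m powr pp)" .
      moreover have "t powr (-pp) * m powr pp \<ge> 0" by simp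
      ultimately have "(\<Lambda> / \<beta>) * (A t - A m) \<le> \<theta> * sqrt (2 * pi)" using th
        by (simp add: mult_left_le)
      then have "(1 + \<eta>) * ((\<Lambda> / \<beta>) * (A t - A m)) \<le> (1 + \<eta>) * (\<theta> * sqrt (2 * pi))"
        using \<eta>(1) by (intro mult_left_mono) auto
      moreover have "(1 + \<eta>) * (\<theta> * sqrt (2 * pi)) = sqrt (2 * pi) - D" unfolding D_def by (simp add: algebra_simps)
      ultimately show False using bu Km elim by linarith
    qed
  qed
qed

end


context L begin

lemma c2_id: "c_beta 2 * sqrt 2 / 2 = sqrt (2 * pi)"
  unfolding c_beta_def by (simp add: real_sqrt_mult)

lemma eq_upper: assumes b2: "\<beta> = 2" and th: "\<theta> > 1"
  shows "eventually (\<lambda>t. lam t \<le> \<theta> * (c_beta 2 / ln t)) at_top"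
proof -
  define c where "c = c_beta 2"
  have c0: "c > 0" unfolding c_def c_beta_def by simp
  define \<eta> where "\<eta> = (\<theta> - 1) / (2 * \<theta>)"
  have \<eta>: "\<eta> > 0" "(1 - \<eta>) * \<theta> = (\<theta> + 1) / 2" using th by (auto simp: \<eta>_def field_simps)
  obtain M where M: "M \<ge> 1" and Mc: "\<forall>\<Lambda> m \<tau>. 0 < \<Lambda> \<and> \<Lambda> \<le> 1 \<and> 0 < m \<and> M * (1 + \<bar>ln \<Lambda>\<bar>) \<le> m\<^sup>2 \<and> m \<le> \<tau> \<longrightarrow>
      \<bar>u \<Lambda> \<tau> - (\<Lambda> / \<beta>) * (\<tau>\<^sup>2 / 2) powr ex\<bar> \<le> \<eta> * ((\<Lambda> / \<beta>) * (\<tau>\<^sup>2 / 2) powr ex)"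
    using core_a[OF \<eta>(1)] by blast
  define A where "A = (\<lambda>\<tau>::real. sqrt 2 * ln \<tau>)"
  have Ad: "\<And>\<tau>. \<tau> > 0 \<Longrightarrow> (A has_real_derivative (\<tau>\<^sup>2 / 2) powr ex) (at \<tau>)"
    unfolding A_def by (rule A_eq_deriv[OF b2])
  define C where "C = \<bar>ln (\<theta> * c)\<bar>"
  have C0: "C \<ge> 0" unfolding C_def by simp
  have E1: "eventually (\<lambda>t::real. t > exp 1) at_top" by (rule eventually_gt_at_top)
  have E2: "eventually (\<lambda>t. \<theta> * c / ln t < 1) at_top" using c0 th by real_asymp
  have E3: "eventually (\<lambda>t. M * (1 + C + ln (ln t)) \<le> ln t powr (1/2)) at_top" using M C0 by real_asymp
  have E6: "eventually (\<lambda>t::real. ln t powr (1/4) \<le> t) at_top" by real_asymp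
  have "((\<lambda>t. (1 - \<eta>) * \<theta> * (1 - ln (ln t) / (4 * ln t))) \<longlongrightarrow> (1 - \<eta>) * \<theta>) at_top" by real_asymp
  moreover have "(1 - \<eta>) * \<theta> > 1" using \<eta>(2) th by simp
  ultimately have E4: "eventually (\<lambda>t. (1 - \<eta>) * \<theta> * (1 - ln (ln t) / (4 * ln t)) > 1) at_top"
    by (rule order_tendstoD)
  from E1 E2 E3 E4 E6 show ?thesis
  proof eventually_elim
    case (elim t)
    define \<Lambda> where "\<Lambda> = \<theta> * c / ln t"
    define m where "m = ln t powr (1/4)"
    have tp: "t > 0" using elim by (smt (verit) exp_gt_zero)
    have lt1: "ln t > 1" using elim tp by (metis ln_exp ln_less_cancel_iff exp_gt_zero)
    have llt: "ln (ln t) \<ge> 0" using lt1 by simp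
    have Lp: "\<Lambda> > 0" "\<Lambda> \<le> 1" unfolding \<Lambda>_def using elim c0 th lt1 by auto
    have "ln \<Lambda> = ln (\<theta> * c) - ln (ln t)" unfolding \<Lambda>_def using c0 th lt1 by (simp add: ln_div)
    then have lnL: "\<bar>ln \<Lambda>\<bar> \<le> C + ln (ln t)" unfolding C_def using llt by linarith
    have m0: "m > 0" unfolding m_def using lt1 by simp
    have m2: "m\<^sup>2 = ln t powr (1/2)" unfolding m_def using lt1 by (simp add: powr_sq)
    have mt: "m \<le> t" unfolding m_def using elim by simp
    have lnm: "ln m = ln (ln t) / 4" unfolding m_def using lt1 by (simp add: ln_powr)
    have "M * (1 + \<bar>ln \<Lambda>\<bar>) \<le> M * (1 + C + ln (ln t))" using lnL M by (simp add: mult_left_mono)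
    then have Mm: "M * (1 + \<bar>ln \<Lambda>\<bar>) \<le> m\<^sup>2" using elim m2 by simp
    show ?case
    proof (rule ccontr)
      assume "\<not> ?case"
      then have L: "\<Lambda> \<le> lam t" unfolding \<Lambda>_def c_def by simp
      have core: "\<And>\<tau>. m \<le> \<tau> \<Longrightarrow> \<bar>u \<Lambda> \<tau> - (\<Lambda> / \<beta>) * (\<tau>\<^sup>2 / 2) powr ex\<bar> \<le> \<eta> * ((\<Lambda> / \<beta>) * (\<tau>\<^sup>2 / 2) powr ex)"
        using Mc Lp m0 Mm by blast
      have bl: "(1 - \<eta>) * ((\<Lambda> / \<beta>) * (A t - A m)) \<le> sqrt (2 * pi)"
        by (rule bound_lower[OF Ad core m0 mt L])
      have "(\<Lambda> / \<beta>) * (A t - A m) = \<theta> * (c * sqrt 2 / 2) * (1 - ln m / ln t)"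
        unfolding \<Lambda>_def A_def b2 using lt1 by (simp add: field_simps)
      also have "c * sqrt 2 / 2 = sqrt (2 * pi)" unfolding c_def by (rule c2_id)
      finally have "(\<Lambda> / \<beta>) * (A t - A m) = \<theta> * sqrt (2 * pi) * (1 - ln (ln t) / (4 * ln t))"
        unfolding lnm by simp
      then have "(1 - \<eta>) * (\<theta> * sqrt (2 * pi) * (1 - ln (ln t) / (4 * ln t))) \<le> sqrt (2 * pi)"
        using bl by simp
      moreover have "(1 - \<eta>) * (\<theta> * sqrt (2 * pi) * (1 - ln (ln t) / (4 * ln t))) = ((1 - \<eta>) * \<theta> * (1 - ln (ln t) / (4 * ln t))) * sqrt (2 * pi)"
        by (simp add: algebra_simps)
      ultimately have "((1 - \<eta>) * \<theta> * (1 - ln (ln t) / (4 * ln t))) * sqrt (2 * pi) \<le> 1 * sqrt (2 * pi)"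
        by simp
      then have "(1 - \<eta>) * \<theta> * (1 - ln (ln t) / (4 * ln t)) \<le> 1" by (rule mult_right_le_imp_le) simp
      then show False using elim by simp
    qed
  qed
qed

lemma eq_lower: assumes b2: "\<beta> = 2" and th: "\<theta> > 0" "\<theta> < 1"
  shows "eventually (\<lambda>t. \<theta> * (c_beta 2 / ln t) \<le> lam t) at_top"
proof -
  define c where "c = c_beta 2"
  have c0: "c > 0" unfolding c_def c_beta_def by simp
  define \<eta> where "\<eta> = (1 - \<theta>) / (2 * \<theta>)"
  have \<eta>: "\<eta> > 0" "(1 + \<eta>) * \<theta> = (\<theta> + 1) / 2" using th by (auto simp: \<eta>_def field_simps)
  obtain M where M: "M \<ge> 1" and Mc: "\<forall>\<Lambda> m \<tau>. 0 < \<Lambda> \<and> \<Lambda> \<le> 1 \<and> 0 < m \<and> M * (1 + \<bar>ln \<Lambda>\<bar>) \<le> m\<^sup>2 \<and> m \<le> \<tau> \<longrightarrow>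
      \<bar>u \<Lambda> \<tau> - (\<Lambda> / \<beta>) * (\<tau>\<^sup>2 / 2) powr ex\<bar> \<le> \<eta> * ((\<Lambda> / \<beta>) * (\<tau>\<^sup>2 / 2) powr ex)"
    using core_a[OF \<eta>(1)] by blast
  obtain R where R: "R \<ge> 0" and Rc: "\<forall>\<Lambda> m \<tau>. 0 < \<Lambda> \<and> \<Lambda> \<le> 1 \<and> 0 \<le> \<tau> \<and> \<tau> \<le> m \<longrightarrow>
      u \<Lambda> \<tau> \<le> \<Lambda> * (R + m powr (2 / \<beta>))"
    using core_b by blast
  define A where "A = (\<lambda>\<tau>::real. sqrt 2 * ln \<tau>)"
  have Ad: "\<And>\<tau>. \<tau> > 0 \<Longrightarrow> (A has_real_derivative (\<tau>\<^sup>2 / 2) powr ex) (at \<tau>)"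
    unfolding A_def by (rule A_eq_deriv[OF b2])
  define C where "C = \<bar>ln (\<theta> * c)\<bar>"
  have C0: "C \<ge> 0" unfolding C_def by simp
  define D where "D = sqrt (2 * pi) * (1 - (1 + \<eta>) * \<theta>)"
  have D0: "D > 0" unfolding D_def using \<eta>(2) th by simp
  have E1: "eventually (\<lambda>t::real. t > exp 1) at_top" by (rule eventually_gt_at_top)
  have E2: "eventually (\<lambda>t. \<theta> * c / ln t < 1) at_top" using c0 th by real_asymp
  have E3: "eventually (\<lambda>t. M * (1 + C + ln (ln t)) \<le> ln t powr (1/2)) at_top" using M C0 by real_asymp
  have E6: "eventually (\<lambda>t::real. ln t powr (1/4) \<le> t) at_top" by real_asymp
  have k0: "\<theta> * c > 0" using th c0 by simp
  have "((\<lambda>t. (\<theta> * c) / ln t * ((R + ln t powr (1/4)) * ln t powr (1/4))) \<longlongrightarrow> 0) at_top"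
    using R k0 by real_asymp
  then have E5: "eventually (\<lambda>t. (\<theta> * c) / ln t * ((R + ln t powr (1/4)) * ln t powr (1/4)) < D) at_top"
    using D0 by (rule order_tendstoD)
  from E1 E2 E3 E5 E6 show ?thesis
  proof eventually_elim
    case (elim t)
    define \<Lambda> where "\<Lambda> = \<theta> * c / ln t"
    define m where "m = ln t powr (1/4)"
    have tp: "t > 0" using elim by (smt (verit) exp_gt_zero)
    have lt1: "ln t > 1" using elim tp by (metis ln_exp ln_less_cancel_iff exp_gt_zero)
    have llt: "ln (ln t) \<ge> 0" using lt1 by simp
    have Lp: "\<Lambda> > 0" "\<Lambda> \<le> 1" unfolding \<Lambda>_def using elim c0 th lt1 by auto
    have "ln \<Lambda> = ln (\<theta> * c) - ln (ln t)" unfolding \<Lambda>_def using c0 th lt1 by (simp add: ln_div)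
    then have lnL: "\<bar>ln \<Lambda>\<bar> \<le> C + ln (ln t)" unfolding C_def using llt by linarith
    have m0: "m > 0" unfolding m_def using lt1 by simp
    have m2: "m\<^sup>2 = ln t powr (1/2)" unfolding m_def using lt1 by (simp add: powr_sq)
    have mt: "m \<le> t" unfolding m_def using elim by simp
    have lnm: "ln m = ln (ln t) / 4" unfolding m_def using lt1 by (simp add: ln_powr)
    have "M * (1 + \<bar>ln \<Lambda>\<bar>) \<le> M * (1 + C + ln (ln t))" using lnL M by (simp add: mult_left_mono)
    then have Mm: "M * (1 + \<bar>ln \<Lambda>\<bar>) \<le> m\<^sup>2" using elim m2 by simp
    define K where "K = \<Lambda> * (R + m powr (2 / \<beta>))"
    have Km: "K * m = (\<theta> * c) / ln t * ((R + ln t powr (1/4)) * ln t powr (1/4))"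
      unfolding K_def \<Lambda>_def b2 using m0 by (simp add: m_def)
    show ?case
    proof (rule ccontr)
      assume "\<not> ?case"
      then have L: "lam t \<le> \<Lambda>" unfolding \<Lambda>_def c_def by simp
      have core: "\<And>\<tau>. m \<le> \<tau> \<Longrightarrow> \<bar>u \<Lambda> \<tau> - (\<Lambda> / \<beta>) * (\<tau>\<^sup>2 / 2) powr ex\<bar> \<le> \<eta> * ((\<Lambda> / \<beta>) * (\<tau>\<^sup>2 / 2) powr ex)"
        using Mc Lp m0 Mm by blast
      have coreb: "\<And>\<tau>. 0 \<le> \<tau> \<Longrightarrow> \<tau> \<le> m \<Longrightarrow> u \<Lambda> \<tau> \<le> K"
        using Rc Lp unfolding K_def by blast
      have bu: "sqrt (2 * pi) \<le> K * m + (1 + \<eta>) * ((\<Lambda> / \<beta>) * (A t - A m))"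
        by (rule bound_upper[OF Ad core coreb m0 mt L less_imp_le[OF \<eta>(1)] Lp(1)])
      have "(\<Lambda> / \<beta>) * (A t - A m) = \<theta> * (c * sqrt 2 / 2) * (1 - ln m / ln t)"
        unfolding \<Lambda>_def A_def b2 using lt1 by (simp add: field_simps)
      also have "c * sqrt 2 / 2 = sqrt (2 * pi)" unfolding c_def by (rule c2_id)
      finally have eq: "(\<Lambda> / \<beta>) * (A t - A m) = \<theta> * sqrt (2 * pi) * (1 - ln m / ln t)" .
      have "ln m \<ge> 0" using lnm llt by simp
      then have "ln m / ln t \<ge> 0" using lt1 by simp
      then have "(\<Lambda> / \<beta>) * (A t - A m) \<le> \<theta> * sqrt (2 * pi)" unfolding eq using th
        by (simp add: mult_left_le)
      then have "(1 + \<eta>) * ((\<Lambda> / \<beta>) * (A t - A m)) \<le> (1 + \<eta>) * (\<theta> * sqrt (2 * pi))"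
        using \<eta>(1) by (intro mult_left_mono) auto
      moreover have "(1 + \<eta>) * (\<theta> * sqrt (2 * pi)) = sqrt (2 * pi) - D" unfolding D_def by (simp add: algebra_simps)
      ultimately show False using bu Km elim by linarith
    qed
  qed
qed

end

theorem lemma3p6:
  fixes \<beta> N t0 :: real and B b lam :: "real \<Rightarrow> real"
  assumes beta: "0 < \<beta>" "\<beta> \<le> 2"
    and N: "N > 0"
    and t0: "t0 > 0"
    and young: "young_function B"
    and Bexp: "\<And>t. t > t0 \<Longrightarrow> B t = N * exp (t powr \<beta>)"
    and Bint: "\<And>t. t \<ge> 0 \<Longrightarrow> (b has_integral B t) {0..t}"
    and bmono: "mono_on {0..} b"
    and bleft: "\<And>t. t > 0 \<Longrightarrow> continuous (at_left t) b"
    and lam: "\<And>t. t > 0 \<Longrightarrow> lam t > 0 \<and>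
        ((\<lambda>\<tau>. B (gen_inv b (lam t * exp (\<tau>\<^sup>2 / 2))) * exp (- (\<tau>\<^sup>2 / 2)))
           has_integral sqrt (2 * pi)) {0..t}"
  shows "(\<beta> < 2 \<longrightarrow> ((\<lambda>t. lam t / (c_beta \<beta> * t powr (1 - 2 / \<beta>))) \<longlongrightarrow> 1) at_top)
       \<and> (\<beta> = 2 \<longrightarrow> ((\<lambda>t. lam t * ln t / c_beta 2) \<longlongrightarrow> 1) at_top)"
  proof -
  interpret L \<beta> N t0 B b lam
    by unfold_locales (fact beta N t0 young Bexp Bint bmono bleft lam)+
  show ?thesis
  proof (intro conjI impI)
    assume b2: "\<beta> < 2"
    have c0: "c_beta \<beta> > 0" unfolding c_beta_def using b2 beta by simp
    have Dp: "eventually (\<lambda>t. c_beta \<beta> * t powr (1 - 2/\<beta>) > 0) at_top"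
      using eventually_gt_at_top[of 0] by eventually_elim (use c0 in simp)
    show "((\<lambda>t. lam t / (c_beta \<beta> * t powr (1 - 2 / \<beta>))) \<longlongrightarrow> 1) at_top"
      by (rule ratio_lim[OF Dp lam_pos lt_upper[OF b2] lt_lower[OF b2]])
  next
    assume b2: "\<beta> = 2"
    have c0: "c_beta 2 > 0" unfolding c_beta_def by simp
    have Dp: "eventually (\<lambda>t. c_beta 2 / ln t > 0) at_top"
      using eventually_gt_at_top[of 1] by eventually_elim (use c0 in simp)
    have "((\<lambda>t. lam t / (c_beta 2 / ln t)) \<longlongrightarrow> 1) at_top"
      by (rule ratio_lim[OF Dp lam_pos eq_upper[OF b2] eq_lower[OF b2]])
    then show "((\<lambda>t. lam t * ln t / c_beta 2) \<longlongrightarrow> 1) at_top" by simp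
  qed
qed

end
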